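(* For every non-negative integer $m$ and positive integer $n$, $$\sum_{k=1}^n\frac{H_{n-k}(m)}{k(k+1)}=H_n(m)+H_n(m+1)-H_{n+1}(m+1).$$ In particular, $\sum_{k=1}^n\frac{H_{n-k}}{k(k+1)}=H_n+H_n^2-H_n^{(2)}-H_{n+1}^2+H_{n+1}^{(2)}$.
   Context: For integers $m\ge 1$, $n\ge 0$, the multiple harmonic-like numbers are $H_n(m)=\sum_{1\le k_1+k_2+\cdots+k_m\le n}\frac{1}{k_1k_2\cdots k_m}$ (sum over positive integers $k_1,\dots,k_m$), with $H_n(0)=1$ for $n\ge 0$ and $H_0(m)=0$ for $m\ge1$. $H_n=H_n(1)=\sum_{k=1}^n\frac1k$, $H_n^{(2)}=\sum_{k=1}^n\frac1{k^2}$. *)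

theory Defs
  imports Complex_Main
begin

text \<open>For m = 0 the only tuple is the
empty one (sum 0, product 1), so H n 0 = 1; for m >= 1, H 0 m = 0.\<close>

definition mh_tuples :: "nat \<Rightarrow> nat \<Rightarrow> nat list set" where
  "mh_tuples n m = {ks. length ks = m \<and> (\<forall>k\<in>set ks. 1 \<le> k) \<and> sum_list ks \<le> n}"

definition H :: "nat \<Rightarrow> nat \<Rightarrow> real" where
  "H n m = (\<Sum>ks\<in>mh_tuples n m. 1 / real (prod_list ks))"

end

theory Submission
  imports Defs
begin

lemma mh_fin: "finite (mh_tuples n m)"
proof -
  have "mh_tuples n m \<subseteq> {xs. set xs \<subseteq> {0..n} \<and> length xs = m}"
    unfolding mh_tuples_def
    using member_le_sum_list by fastforce
  thus ?thesis using finite_lists_length_eq[of "{0..n}" m] finite_subset by blast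
qed

lemma H_0: "H n 0 = 1"
proof -
  have "mh_tuples n 0 = {[]}" unfolding mh_tuples_def by auto
  thus ?thesis unfolding H_def by simp
qed

lemma H_Suc: "H n (Suc m) = (\<Sum>k=1..n. H (n-k) m / real k)"
proof -
  let ?S = "SIGMA k:{1..n}. mh_tuples (n-k) m"
  have eq: "mh_tuples n (Suc m) = (\<lambda>(k,ks). k#ks) ` ?S"
  proof (rule set_eqI, rule iffI)
    fix xs assume "xs \<in> mh_tuples n (Suc m)"
    then obtain k ks where xs: "xs = k#ks" and "1 \<le> k" "length ks = m"
      "\<forall>j\<in>set ks. 1 \<le> j" "k + sum_list ks \<le> n"
      unfolding mh_tuples_def by (cases xs) auto
    then have "(k,ks) \<in> ?S" unfolding mh_tuples_def by auto
    thus "xs \<in> (\<lambda>(k,ks). k#ks) ` ?S" using xs by force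
  next
    fix xs assume "xs \<in> (\<lambda>(k,ks). k#ks) ` ?S"
    thus "xs \<in> mh_tuples n (Suc m)" unfolding mh_tuples_def by auto
  qed
  have inj: "inj_on (\<lambda>(k,ks). k#ks) ?S" by (auto simp: inj_on_def)
  have "H n (Suc m) = (\<Sum>(k,ks)\<in>?S. 1 / real (prod_list (k#ks)))"
    unfolding H_def eq by (subst sum.reindex[OF inj]) (simp add: case_prod_unfold)
  also have "\<dots> = (\<Sum>k\<in>{1..n}. \<Sum>ks\<in>mh_tuples (n-k) m. 1 / real (prod_list (k#ks)))"
    by (rule sum.Sigma[symmetric]) (auto simp: mh_fin)
  also have "\<dots> = (\<Sum>k=1..n. H (n-k) m / real k)"
    unfolding H_def by (simp add: sum_divide_distrib mult.commute)
  finally show ?thesis .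
qed

lemma H_1: "H n 1 = (\<Sum>j=1..n. 1 / real j)"
  using H_Suc[of n 0] by (simp add: H_0)

lemma part1:
  assumes "1 \<le> n"
  shows "(\<Sum>k=1..n. H (n - k) m / (real k * real (k + 1)))
           = H n m + H n (m + 1) - H (n + 1) (m + 1)"
proof -
  have split: "H (n - k) m / (real k * real (k + 1)) = H (n-k) m / real k - H (n-k) m / real (k+1)"
    if "k \<ge> 1" for k using that by (simp add: field_simps)
  have a: "(\<Sum>k=1..n. H (n - k) m / (real k * real (k + 1))) =
     (\<Sum>k=1..n. H (n-k) m / real k) - (\<Sum>k=1..n. H (n-k) m / real (k+1))"
    by (subst sum_subtractf[symmetric], rule sum.cong) (auto simp: field_simps)
  have b: "H (n+1) (m+1) = H n m + (\<Sum>k=1..n. H (n-k) m / real (k+1))"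
  proof -
    have "H (n+1) (m+1) = (\<Sum>k=1..n+1. H (n+1-k) m / real k)" using H_Suc by simp
    also have "\<dots> = H n m + (\<Sum>k=Suc 1..Suc n. H (n+1-k) m / real k)"
      by (subst sum.atLeast_Suc_atMost) auto
    also have "(\<Sum>k=Suc 1..Suc n. H (n+1-k) m / real k) = (\<Sum>k=1..n. H (n-k) m / real (k+1))"
      by (subst sum.shift_bounds_cl_Suc_ivl) simp
    finally show ?thesis .
  qed
  show ?thesis using a b H_Suc[of n m] by simp
qed

definition hh :: "nat \<Rightarrow> real" where "hh n = (\<Sum>j=1..n. 1 / real j)"
definition hh2 :: "nat \<Rightarrow> real" where "hh2 n = (\<Sum>j=1..n. 1 / (real j)^2)"

lemma T_sum: "(\<Sum>k=1..n. 1 / (real k * real (n+1-k))) = 2 * hh n / real (n+1)"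
proof -
  have e: "1 / (real k * real (n+1-k)) = (1 / real k + 1 / real (n+1-k)) / real (n+1)"
    if "k \<in> {1..n}" for k
  proof -
    have s: "real (n+1-k) + real k = real (n+1)" using that by (simp add: of_nat_diff)
    have "real (n+1-k) > 0" "real k > 0" using that by auto
    then show ?thesis using s
      by (simp add: divide_simps)
  qed
  have r: "(\<Sum>k=1..n. 1 / real (n+1-k)) = hh n"
    unfolding hh_def by (rule sum.reindex_bij_witness[where i="\<lambda>k. n+1-k" and j="\<lambda>k. n+1-k"]) auto
  have "(\<Sum>k=1..n. 1 / (real k * real (n+1-k))) = (\<Sum>k=1..n. (1 / real k + 1 / real (n+1-k))) / real (n+1)"
    unfolding sum_divide_distrib by (rule sum.cong[OF refl], rule e)
  also have "\<dots> = 2 * hh n / real (n+1)" by (simp only: sum.distrib r) (simp add: hh_def)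
  finally show ?thesis .
qed

lemma S_sum: "(\<Sum>k=1..n. hh (n-k) / real k) = (hh n)^2 - hh2 n"
proof (induction n)
  case 0 thus ?case by (simp add: hh_def hh2_def)
next
  case (Suc n)
  have "(\<Sum>k=1..Suc n. hh (Suc n-k) / real k) = (\<Sum>k=1..n. hh (Suc n-k) / real k)"
    by (simp add: hh_def)
  also have "\<dots> = (\<Sum>k=1..n. hh (n-k) / real k + 1 / (real k * real (n+1-k)))"
  proof (rule sum.cong[OF refl])
    fix k assume k: "k \<in> {1..n}"
    then have "Suc n - k = Suc (n-k)" by auto
    then have "hh (Suc n - k) = hh (n-k) + 1 / real (n+1-k)"
      using k by (simp add: hh_def)
    thus "hh (Suc n-k) / real k = hh (n-k) / real k + 1 / (real k * real (n+1-k))"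
      by (simp add: add_divide_distrib)
  qed
  also have "\<dots> = (hh n)^2 - hh2 n + 2 * hh n / real (n+1)"
    by (simp only: sum.distrib Suc.IH T_sum)
  also have "\<dots> = (hh (Suc n))^2 - hh2 (Suc n)"
  proof -
    have a: "hh (Suc n) = hh n + 1 / real (n+1)" "hh2 (Suc n) = hh2 n + 1 / (real (n+1))^2"
      by (simp_all add: hh_def hh2_def)
    have p: "real (n+1) > 0" by simp
    have g: "(h::real)^2 - b + 2*h/x = (h + 1/x)^2 - (b + 1/x^2)" if "x \<noteq> 0" for h b x
      using that by (simp add: power2_eq_square field_simps)
    show ?thesis unfolding a using g[of "real (n+1)" "hh n" "hh2 n"] by simp
  qed
  finally show ?case .
qed

theorem theorem8:
  fixes m n :: nat
  assumes "1 \<le> n"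
  shows "((\<Sum>k=1..n. H (n - k) m / (real k * real (k + 1)))
           = H n m + H n (m + 1) - H (n + 1) (m + 1))
         \<and> ((\<Sum>k=1..n. (\<Sum>j=1..n-k. 1 / real j) / (real k * real (k + 1)))
           = (\<Sum>j=1..n. 1 / real j) + (\<Sum>j=1..n. 1 / real j)^2 - (\<Sum>j=1..n. 1 / (real j)^2)
             - (\<Sum>j=1..n+1. 1 / real j)^2 + (\<Sum>j=1..n+1. 1 / (real j)^2))"
proof
  show "(\<Sum>k=1..n. H (n - k) m / (real k * real (k + 1)))
           = H n m + H n (m + 1) - H (n + 1) (m + 1)" using part1[OF assms] .
  have h1: "H k 1 = hh k" for k using H_1[of k] by (simp add: hh_def)
  have h2: "H k 2 = (hh k)^2 - hh2 k" for k
    using H_Suc[of k 1] S_sum[of k] h1 by (simp add: numeral_2_eq_2)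
  have "(\<Sum>k=1..n. hh (n - k) / (real k * real (k + 1))) = hh n + ((hh n)^2 - hh2 n) - ((hh (n+1))^2 - hh2 (n+1))"
    using part1[OF assms, of 1] using h1[simplified] h2[simplified numeral_2_eq_2] by (simp add: power2_eq_square)
  thus "(\<Sum>k=1..n. (\<Sum>j=1..n-k. 1 / real j) / (real k * real (k + 1)))
           = (\<Sum>j=1..n. 1 / real j) + (\<Sum>j=1..n. 1 / real j)^2 - (\<Sum>j=1..n. 1 / (real j)^2)
             - (\<Sum>j=1..n+1. 1 / real j)^2 + (\<Sum>j=1..n+1. 1 / (real j)^2)"
    unfolding hh_def hh2_def by simp
qed

end
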